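(* Let $\mathcal{A}$ be an $N$-dimensional real associative unital algebra generated by $\varepsilon$, i.e. every $z\in\mathcal{A}$ has the form $z=x_1+x_2\varepsilon+\cdots+x_N\varepsilon^{N-1}$ with $x_1,\dots,x_N\in\mathbb{R}$. Then there exist unique functions $f_1,\dots,f_N:\mathbb{R}\to\mathbb{R}$ such that $e^{\varepsilon t}=f_1(t)+\varepsilon f_2(t)+\cdots+\varepsilon^{N-1}f_N(t)$ for all $t\in\mathbb{R}$. Moreover, for each $i$ there exist real constants $c_{ij}$ with $f_i(t)=\sum_{j=0}^\infty c_{ij}t^j$ for all $t\in\mathbb{R}$ (so each $f_i$ is entire on $\mathbb{R}$), and each $f_i$ extends uniquely to an entire function on $\mathcal{A}$, namely $f_i(z)=\sum_{j=0}^\infty c_{ij}z^j$ for $z\in\mathcal{A}$.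
   Context: The exponential on $\mathcal{A}$ is $e^z=\sum_{n\ge0}z^n/n!$. A function $g:\mathcal{A}\to\mathcal{A}$ is entire if it can be written as a power series $\sum_n b_n z^n$ with $b_n\in\mathcal{A}$ converging for all $z\in\mathcal{A}$. $\mathbb{R}$ is identified with $\mathbb{R}\cdot 1\subseteq\mathcal{A}$; an extension of a real function $f$ is a function on $\mathcal{A}$ whose restriction to $\mathbb{R}$ is $f$. Convergence in $\mathcal{A}$ is with respect to any norm on the finite-dimensional space $\mathcal{A}$. *)

theory Defs
  imports "HOL-Analysis.Analysis"
begin

text \<open>The algebra is modelled as a type that is both a real unital (associative) algebra
and a finite-dimensional Euclidean space (i.e. a finite-dimensional real vector space with
some inner product; every finite-dimensional real vector space admits one, and the induced
topology is the unique norm topology).\<close>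

definition alg_exp :: "'a::{real_algebra_1, euclidean_space} \<Rightarrow> 'a" where
  "alg_exp z = (\<Sum>n. (1 / fact n) *\<^sub>R z ^ n)"

definition entire_alg :: "('a::{real_algebra_1, euclidean_space} \<Rightarrow> 'a) \<Rightarrow> bool" where
  "entire_alg g \<longleftrightarrow> (\<exists>b::nat \<Rightarrow> 'a. \<forall>z. (\<lambda>n. b n * z ^ n) sums g z)"

end

theory Submission imports Defs "HOL-Complex_Analysis.Complex_Analysis" begin

lemma scaleR_power_alg: "(x *\<^sub>R (y::'a::real_algebra_1)) ^ n = (x ^ n) *\<^sub>R (y ^ n)"
  by (induction n) (simp_all add: mult_scaleR_left mult_scaleR_right)

lemma real_powser_zero:
  fixes a :: "nat \<Rightarrow> real"
  assumes "\<And>t. (\<lambda>n. a n * t ^ n) sums 0"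
  shows "a n = 0"
proof (cases "n = 0")
  case True
  from assms[of 0] show ?thesis using True by simp
next
  case False
  show ?thesis
  proof (rule ccontr)
    assume "a n \<noteq> 0"
    show False
    proof (rule powser_0_nonzero[of 1 0 a "\<lambda>_. 0" n])
      show "0 < (1::real)" by simp
      show "\<And>x. norm (x - 0) < 1 \<Longrightarrow> (\<lambda>n. a n * (x-0)^n) sums (\<lambda>_. 0::real) x" using assms by simp
      show "(\<lambda>_. 0::real) 0 = 0" by simp
      show "a n \<noteq> 0" by fact
      show "0 < n" using False by simp
      fix s :: real assume "0 < s" and h: "\<And>z::real. z \<in> cball 0 s - {0} \<Longrightarrow> (\<lambda>_. 0::real) z \<noteq> 0"
      from h[of s] \<open>0<s\<close> show False by simp
    qed
  qed
qed

lemma mult_bound_alg: "\<exists>K>0. \<forall>x y::'a::{real_algebra_1, euclidean_space}. norm (x*y) \<le> norm x * norm y * K"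
proof -
  have "bilinear ((*) :: 'a \<Rightarrow> 'a \<Rightarrow> 'a)"
    unfolding bilinear_def
    by (auto intro!: linearI simp: distrib_left distrib_right)
  then have "bounded_bilinear ((*) :: 'a \<Rightarrow> 'a \<Rightarrow> 'a)"
    by (simp add: bilinear_conv_bounded_bilinear)
  then show ?thesis by (rule bounded_bilinear.pos_bounded)
qed

lemma pow_bound_alg:
  fixes x :: "'a::{real_algebra_1, euclidean_space}"
  assumes K: "K > 0" "\<forall>x y::'a. norm (x*y) \<le> norm x * norm y * K"
  shows "norm (x^n) \<le> norm (1::'a) * (K * norm x)^n"
proof (induction n)
  case 0 then show ?case by simp
next
  case (Suc n)
  have "norm (x^Suc n) \<le> norm x * norm (x^n) * K" using K by (simp add: power_Suc)
  also have "\<dots> \<le> norm x * (norm (1::'a) * (K * norm x)^n) * K"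
    using Suc K by (intro mult_right_mono mult_left_mono) auto
  also have "\<dots> = norm (1::'a) * (K * norm x)^Suc n" by (simp add: algebra_simps)
  finally show ?case .
qed

lemma summable_alg_exp_like:
  fixes z :: "'a::{real_algebra_1, euclidean_space}"
  assumes a: "\<And>n. \<bar>a n\<bar> \<le> B * R^n / fact n" and R: "R \<ge> 0"
  shows "summable (\<lambda>n. a n *\<^sub>R z^n)"
proof -
  obtain K where K: "K > 0" "\<forall>x y::'a. norm (x*y) \<le> norm x * norm y * K"
    using mult_bound_alg by blast
  have B: "B \<ge> 0" using a[of 0] by simp
  show ?thesis
  proof (rule summable_comparison_test)
    show "summable (\<lambda>n. (B * norm (1::'a)) * (inverse (fact n) * (R * K * norm z) ^ n))"
      by (intro summable_mult summable_exp)
    show "\<exists>N. \<forall>n\<ge>N. norm (a n *\<^sub>R z ^ n) \<le> (B * norm (1::'a)) * (inverse (fact n) * (R * K * norm z) ^ n)"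
    proof (intro exI allI impI)
      fix n :: nat
      have "norm (a n *\<^sub>R z ^ n) = \<bar>a n\<bar> * norm (z^n)" by simp
      also have "\<dots> \<le> (B * R^n / fact n) * (norm (1::'a) * (K * norm z)^n)"
        using a[of n] pow_bound_alg[OF K, of z n] by (intro mult_mono) auto
      also have "\<dots> = (B * norm (1::'a)) * (inverse (fact n) * (R * K * norm z) ^ n)"
        by (simp add: field_simps power_mult_distrib)
      finally show "norm (a n *\<^sub>R z ^ n) \<le> (B * norm (1::'a)) * (inverse (fact n) * (R * K * norm z) ^ n)" .
    qed
  qed
qed

lemma indep_pow:
  fixes \<epsilon> :: "'a::{real_algebra_1, euclidean_space}" and N :: nat
  assumes dim: "DIM('a) = N"
    and gen: "\<forall>z::'a. \<exists>x::nat \<Rightarrow> real. z = (\<Sum>i<N. x i *\<^sub>R \<epsilon> ^ i)"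
  shows "\<And>x. (\<Sum>i<N. x i *\<^sub>R \<epsilon> ^ i) = 0 \<Longrightarrow> (\<forall>i<N. x i = 0)"
proof -
  fix x :: "nat \<Rightarrow> real"
  assume x0: "(\<Sum>i<N. x i *\<^sub>R \<epsilon> ^ i) = 0"
  define S where "S = (\<lambda>i. \<epsilon> ^ i) ` {..<N}"
  have fin: "finite S" by (simp add: S_def)
  have sp: "UNIV \<subseteq> span S"
  proof
    fix z :: 'a
    obtain y where y: "z = (\<Sum>i<N. y i *\<^sub>R \<epsilon> ^ i)" using gen by blast
    have "\<forall>i\<in>{..<N}. y i *\<^sub>R \<epsilon> ^ i \<in> span S" by (intro ballI span_scale span_base) (auto simp: S_def)
    then show "z \<in> span S" unfolding y by (intro span_sum) auto
  qed
  have "dim (UNIV::'a set) \<le> card S" by (rule dim_le_card[OF sp fin])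
  moreover have "card S \<le> N" unfolding S_def using card_image_le[of "{..<N}"] by simp
  ultimately have cS: "card S = N" using dim by (simp add: dim_UNIV)
  have ind: "independent S"
    by (rule card_le_dim_spanning[OF _ sp fin]) (auto simp: cS dim_UNIV dim)
  have inj: "inj_on (\<lambda>i. \<epsilon> ^ i) {..<N}"
    by (rule eq_card_imp_inj_on) (auto simp: cS[unfolded S_def])
  define u where "u v = x (the_inv_into {..<N} (\<lambda>i. \<epsilon> ^ i) v)" for v
  have "(\<Sum>v\<in>S. u v *\<^sub>R v) = (\<Sum>i<N. x i *\<^sub>R \<epsilon> ^ i)"
    unfolding S_def by (subst sum.reindex[OF inj]) (simp add: u_def the_inv_into_f_f[OF inj])
  then have "(\<Sum>v\<in>S. u v *\<^sub>R v) = 0" using x0 by simp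
  then have "\<forall>v\<in>S. u v = 0" using ind dependent_finite[OF fin] by blast
  then show "\<forall>i<N. x i = 0"
    unfolding S_def u_def using the_inv_into_f_f[OF inj] by auto
qed

theorem theorem7p3:
  fixes \<epsilon> :: "'a::{real_algebra_1, euclidean_space}" and N :: nat
  assumes dim: "DIM('a) = N"
    and gen: "\<forall>z::'a. \<exists>x::nat \<Rightarrow> real. z = (\<Sum>i<N. x i *\<^sub>R \<epsilon> ^ i)"
  shows "\<exists>f::nat \<Rightarrow> real \<Rightarrow> real.
           (\<forall>t. alg_exp (t *\<^sub>R \<epsilon>) = (\<Sum>i<N. f i t *\<^sub>R \<epsilon> ^ i))
         \<and> (\<forall>g::nat \<Rightarrow> real \<Rightarrow> real.
              (\<forall>t. alg_exp (t *\<^sub>R \<epsilon>) = (\<Sum>i<N. g i t *\<^sub>R \<epsilon> ^ i)) \<longrightarrow> (\<forall>i<N. g i = f i))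
         \<and> (\<forall>i<N. \<exists>c::nat \<Rightarrow> real.
              (\<forall>t. (\<lambda>j. c j * t ^ j) sums f i t)
            \<and> (\<forall>z::'a. summable (\<lambda>j. c j *\<^sub>R z ^ j))
            \<and> (\<forall>h::'a \<Rightarrow> 'a.
                 (entire_alg h \<and> (\<forall>t. h (of_real t) = of_real (f i t)))
                 \<longleftrightarrow> h = (\<lambda>z. \<Sum>j. c j *\<^sub>R z ^ j)))"
proof -
  have indep: "\<And>x y. (\<Sum>i<N. x i *\<^sub>R \<epsilon> ^ i) = (\<Sum>i<N. y i *\<^sub>R \<epsilon> ^ i) \<Longrightarrow> \<forall>i<N. x i = y i"
  proof -
    fix x y :: "nat \<Rightarrow> real"
    assume "(\<Sum>i<N. x i *\<^sub>R \<epsilon> ^ i) = (\<Sum>i<N. y i *\<^sub>R \<epsilon> ^ i)"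
    then have "(\<Sum>i<N. (x i - y i) *\<^sub>R \<epsilon> ^ i) = 0"
      by (simp add: scaleR_diff_left sum_subtractf)
    from indep_pow[OF dim gen this] show "\<forall>i<N. x i = y i" by simp
  qed
  define co where "co z = (SOME x. z = (\<Sum>i<N. x i *\<^sub>R \<epsilon> ^ i))" for z :: 'a
  have co_rep: "z = (\<Sum>i<N. co z i *\<^sub>R \<epsilon> ^ i)" for z
  proof -
    have "\<exists>x. z = (\<Sum>i<N. x i *\<^sub>R \<epsilon> ^ i)" using gen by blast
    then have "z = (\<Sum>i<N. (SOME x. z = (\<Sum>i<N. x i *\<^sub>R \<epsilon> ^ i)) i *\<^sub>R \<epsilon> ^ i)" by (rule someI_ex)
    then show ?thesis by (simp only: co_def)
  qed
  have co_add: "co (z + w) i = co z i + co w i" if "i < N" for z w i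
  proof -
    have "(\<Sum>i<N. co (z+w) i *\<^sub>R \<epsilon> ^ i) = (\<Sum>i<N. (co z i + co w i) *\<^sub>R \<epsilon> ^ i)"
    proof -
      have "(\<Sum>i<N. co (z+w) i *\<^sub>R \<epsilon> ^ i) = z + w" by (rule co_rep[symmetric])
      also have "\<dots> = (\<Sum>i<N. co z i *\<^sub>R \<epsilon> ^ i) + (\<Sum>i<N. co w i *\<^sub>R \<epsilon> ^ i)"
        by (rule arg_cong2[where f="(+)", OF co_rep co_rep])
      also have "\<dots> = (\<Sum>i<N. (co z i + co w i) *\<^sub>R \<epsilon> ^ i)"
        by (simp add: scaleR_add_left sum.distrib)
      finally show ?thesis .
    qed
    from indep[OF this] that show ?thesis by blast
  qed
  have co_scale: "co (c *\<^sub>R z) i = c * co z i" if "i < N" for c z i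
  proof -
    have "(\<Sum>i<N. co (c *\<^sub>R z) i *\<^sub>R \<epsilon> ^ i) = (\<Sum>i<N. (c * co z i) *\<^sub>R \<epsilon> ^ i)"
    proof -
      have "(\<Sum>i<N. co (c *\<^sub>R z) i *\<^sub>R \<epsilon> ^ i) = c *\<^sub>R z" by (rule co_rep[symmetric])
      also have "\<dots> = c *\<^sub>R (\<Sum>i<N. co z i *\<^sub>R \<epsilon> ^ i)"
        by (rule arg_cong[OF co_rep])
      also have "\<dots> = (\<Sum>i<N. (c * co z i) *\<^sub>R \<epsilon> ^ i)"
        by (simp add: scaleR_sum_right)
      finally show ?thesis .
    qed
    from indep[OF this] that show ?thesis by blast
  qed
  have bl: "bounded_linear (\<lambda>z. co z i)" if "i < N" for i
    unfolding linear_conv_bounded_linear[symmetric]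
    by (rule linearI) (use co_add co_scale that in auto)
  obtain K where K: "K > 0" "\<forall>x y::'a. norm (x*y) \<le> norm x * norm y * K"
    using mult_bound_alg by blast
  have exp_sums: "(\<lambda>n. (t ^ n / fact n) *\<^sub>R \<epsilon> ^ n) sums alg_exp (t *\<^sub>R \<epsilon>)" for t
  proof -
    have "summable (\<lambda>n. (1 / fact n) *\<^sub>R (t *\<^sub>R \<epsilon>) ^ n)"
      by (rule summable_alg_exp_like[of _ 1 1]) simp_all
    then have "(\<lambda>n. (1 / fact n) *\<^sub>R (t *\<^sub>R \<epsilon>) ^ n) sums alg_exp (t *\<^sub>R \<epsilon>)"
      unfolding alg_exp_def by (rule summable_sums)
    moreover have "(1 / fact n) *\<^sub>R (t *\<^sub>R \<epsilon>) ^ n = (t ^ n / fact n) *\<^sub>R \<epsilon> ^ n" for n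
      by (simp add: scaleR_power_alg)
    ultimately show ?thesis by simp
  qed
  define f where "f i t = co (alg_exp (t *\<^sub>R \<epsilon>)) i" for i t
  show ?thesis
  proof (intro exI[of _ f] conjI allI impI)
    show "alg_exp (t *\<^sub>R \<epsilon>) = (\<Sum>i<N. f i t *\<^sub>R \<epsilon> ^ i)" for t
      unfolding f_def by (rule co_rep)
    show "g i = f i" if "\<forall>t. alg_exp (t *\<^sub>R \<epsilon>) = (\<Sum>i<N. g i t *\<^sub>R \<epsilon> ^ i)" "i < N" for g i
    proof
      fix t
      have "(\<Sum>i<N. g i t *\<^sub>R \<epsilon> ^ i) = (\<Sum>i<N. f i t *\<^sub>R \<epsilon> ^ i)"
        unfolding f_def by (rule trans[OF that(1)[rule_format, symmetric] co_rep])
      from indep[OF this] that(2) show "g i t = f i t" by blast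
    qed
  next
    fix i assume i: "i < N"
    define c where "c j = co (\<epsilon> ^ j) i / fact j" for j
    show "\<exists>c::nat \<Rightarrow> real.
              (\<forall>t. (\<lambda>j. c j * t ^ j) sums f i t)
            \<and> (\<forall>z::'a. summable (\<lambda>j. c j *\<^sub>R z ^ j))
            \<and> (\<forall>h::'a \<Rightarrow> 'a.
                 (entire_alg h \<and> (\<forall>t. h (of_real t) = of_real (f i t)))
                 \<longleftrightarrow> h = (\<lambda>z. \<Sum>j. c j *\<^sub>R z ^ j))"
    proof (intro exI[of _ c] conjI allI)
      show csums: "(\<lambda>j. c j * t ^ j) sums f i t" for t
      proof -
        have "(\<lambda>n. co ((t ^ n / fact n) *\<^sub>R \<epsilon> ^ n) i) sums f i t"
          unfolding f_def by (rule bounded_linear.sums[OF bl[OF i] exp_sums])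
        then show ?thesis by (simp add: co_scale[OF i] c_def ac_simps)
      qed
      obtain B where B: "\<And>x. norm (co x i) \<le> norm x * B" and Bpos: "B > 0"
        using bounded_linear.pos_bounded[OF bl[OF i]] by blast
      have cb: "\<bar>c n\<bar> \<le> (B * norm (1::'a)) * (K * norm \<epsilon>) ^ n / fact n" for n
      proof -
        have "\<bar>c n\<bar> = \<bar>co (\<epsilon> ^ n) i\<bar> / fact n" by (simp add: c_def)
        also have "\<dots> \<le> (norm (\<epsilon> ^ n) * B) / fact n"
          using B[of "\<epsilon>^n"] by (intro divide_right_mono) auto
        also have "\<dots> \<le> ((norm (1::'a) * (K * norm \<epsilon>)^n) * B) / fact n"
        proof -
          have "B \<ge> 0" using Bpos by simp
          then show ?thesis
            using pow_bound_alg[OF K, of \<epsilon> n] by (intro divide_right_mono mult_right_mono) auto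
        qed
        finally show ?thesis by (simp add: algebra_simps)
      qed
      show csum: "summable (\<lambda>j. c j *\<^sub>R z ^ j)" for z :: 'a
        by (rule summable_alg_exp_like[OF cb]) (use K in simp)
      show "(entire_alg h \<and> (\<forall>t. h (of_real t) = of_real (f i t))) \<longleftrightarrow> h = (\<lambda>z. \<Sum>j. c j *\<^sub>R z ^ j)"
        for h :: "'a \<Rightarrow> 'a"
      proof
        assume L: "entire_alg h \<and> (\<forall>t. h (of_real t) = of_real (f i t))"
        then obtain b where b: "\<forall>z. (\<lambda>n. b n * z^n) sums h z" unfolding entire_alg_def by blast
        define d where "d n = b n - c n *\<^sub>R 1" for n
        have ofr: "(\<lambda>n. (c n * t ^ n) *\<^sub>R (1::'a)) sums (f i t *\<^sub>R 1)" for t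
          by (rule bounded_linear.sums[OF bounded_linear_scaleR_left csums])
        have dsum: "(\<lambda>n. t^n *\<^sub>R d n) sums 0" for t
        proof -
          have 1: "(\<lambda>n. b n * of_real t ^ n) sums of_real (f i t)"
            using b[rule_format, of "of_real t"] L by simp
          have "(c n *\<^sub>R 1) * (of_real t :: 'a) ^ n = (c n * t ^ n) *\<^sub>R 1" for n
            by (simp add: of_real_def scaleR_power_alg mult_scaleR_left mult_scaleR_right)
          then have 2: "(\<lambda>n. (c n *\<^sub>R 1) * (of_real t :: 'a) ^ n) sums of_real (f i t)"
            using ofr[of t] by (simp add: of_real_def)
          from sums_diff[OF 1 2] have 3: "(\<lambda>n. b n * of_real t ^ n - (c n *\<^sub>R 1) * of_real t ^ n) sums 0" by simp
          have "b n * of_real t ^ n - (c n *\<^sub>R 1) * of_real t ^ n = t^n *\<^sub>R d n" for n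
            by (simp add: d_def of_real_def scaleR_power_alg mult_scaleR_right scaleR_diff_right)
          with 3 show ?thesis by simp
        qed
        have d0: "d n = 0" for n
        proof -
          have ck: "co (d n) k = 0" if k: "k<N" for k
          proof (rule real_powser_zero[where a="\<lambda>n. co (d n) k"])
            fix t
            from bounded_linear.sums[OF bl[OF k] dsum[of t]] show "(\<lambda>n. co (d n) k * t^n) sums 0"
              by (simp add: co_scale[OF k] mult.commute co_scale[OF k, of 0 0, simplified])
          qed
          have "d n = (\<Sum>k<N. co (d n) k *\<^sub>R \<epsilon> ^ k)" by (rule co_rep)
          also have "\<dots> = 0" using ck by simp
          finally show ?thesis .
        qed
        have bn: "b n = c n *\<^sub>R 1" for n using d0[of n] unfolding d_def by simp
        show "h = (\<lambda>z. \<Sum>j. c j *\<^sub>R z ^ j)"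
        proof
          fix z
          from b have "(\<lambda>n. b n * z^n) sums h z" by blast
          then have "(\<lambda>n. c n *\<^sub>R z^n) sums h z" by (simp add: bn mult_scaleR_left)
          then show "h z = (\<Sum>j. c j *\<^sub>R z^j)" by (simp add: sums_iff)
        qed
      next
        assume H: "h = (\<lambda>z. \<Sum>j. c j *\<^sub>R z ^ j)"
        show "entire_alg h \<and> (\<forall>t. h (of_real t) = of_real (f i t))"
        proof
          show "entire_alg h" unfolding entire_alg_def H
          proof (intro exI[of _ "\<lambda>n. c n *\<^sub>R 1"] allI)
            fix z :: 'a
            show "(\<lambda>n. (c n *\<^sub>R 1) * z^n) sums (\<Sum>j. c j *\<^sub>R z^j)"
              using summable_sums[OF csum[of z]] by (simp add: mult_scaleR_left)
          qed
          show "\<forall>t. h (of_real t) = of_real (f i t)"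
          proof
            fix t
            have "(\<lambda>n. (c n * t ^ n) *\<^sub>R (1::'a)) sums (f i t *\<^sub>R 1)"
              by (rule bounded_linear.sums[OF bounded_linear_scaleR_left csums])
            moreover have "(c n * t^n) *\<^sub>R (1::'a) = c n *\<^sub>R (of_real t :: 'a)^n" for n
              by (simp add: of_real_def scaleR_power_alg)
            ultimately have "(\<lambda>n. c n *\<^sub>R (of_real t::'a)^n) sums of_real (f i t)"
              by (simp add: of_real_def)
            then show "h (of_real t) = of_real (f i t)" unfolding H by (simp add: sums_iff)
          qed
        qed
      qed
    qed
  qed
qed

end
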